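(* For every $n\ge1$ and every boolean function $f:\{-1,1\}^n\to\{-1,1\}$, $$\mathrm{Ent}(f)\le \frac{1}{\ln 2}\Big(3I(f)+\sum_{k=1}^n I_k(f)\ln\frac{4}{I_k(f)}\Big),$$ with the convention $I_k(f)\ln\frac{4}{I_k(f)}=0$ when $I_k(f)=0$.
   Context: Let $x$ be uniformly distributed on $\{-1,1\}^n$. For $k\in[n]$, $\mu_k$ flips the $k$-th coordinate. $I_k(f)=\mathbb{P}_x[f(x)\neq f(\mu_k(x))]$, $I(f)=\sum_k I_k(f)$. For $S\subseteq[n]$, $\hat f(S)=\mathbb{E}_x[f(x)\prod_{k\in S}x_k]$, and $\mathrm{Ent}(f)=\sum_{S\subseteq[n]}\hat f(S)^2\log_2\frac{1}{\hat f(S)^2}$ (terms with $\hat f(S)=0$ are $0$). $\ln$ is the natural logarithm. *)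

theory Defs
  imports Complex_Main "HOL-Library.FuncSet"
begin

definition cube :: "nat \<Rightarrow> (nat \<Rightarrow> real) set" where
  "cube n = PiE {..<n} (\<lambda>_. {-1, 1})"

definition flip :: "nat \<Rightarrow> (nat \<Rightarrow> real) \<Rightarrow> (nat \<Rightarrow> real)" where
  "flip k x = x(k := - x k)"

definition infl_k :: "nat \<Rightarrow> ((nat \<Rightarrow> real) \<Rightarrow> real) \<Rightarrow> nat \<Rightarrow> real" where
  "infl_k n f k = real (card {x \<in> cube n. f x \<noteq> f (flip k x)}) / 2 ^ n"

definition total_infl :: "nat \<Rightarrow> ((nat \<Rightarrow> real) \<Rightarrow> real) \<Rightarrow> real" where
  "total_infl n f = (\<Sum>k<n. infl_k n f k)"

definition fourier :: "nat \<Rightarrow> ((nat \<Rightarrow> real) \<Rightarrow> real) \<Rightarrow> nat set \<Rightarrow> real" where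
  "fourier n f S = (\<Sum>x\<in>cube n. f x * (\<Prod>k\<in>S. x k)) / 2 ^ n"

definition spectral_entropy :: "nat \<Rightarrow> ((nat \<Rightarrow> real) \<Rightarrow> real) \<Rightarrow> real" where
  "spectral_entropy n f = (\<Sum>S\<in>Pow {..<n}.
      if fourier n f S = 0 then 0
      else (fourier n f S)\<^sup>2 * log 2 (1 / (fourier n f S)\<^sup>2))"

end

theory Submission imports Defs begin

lemma cube_mem: "x \<in> cube n \<Longrightarrow> k < n \<Longrightarrow> x k = -1 \<or> x k = 1"
  by (auto simp: cube_def PiE_iff)

lemma finite_cube: "finite (cube n)"
  by (simp add: cube_def finite_PiE)

lemma card_cube: "card (cube n) = 2 ^ n"
  by (simp add: cube_def card_PiE numeral_2_eq_2)

lemma chi_sum: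
  assumes "x \<in> cube n" "y \<in> cube n"
  shows "(\<Sum>S\<in>Pow {..<n}. (\<Prod>k\<in>S. x k) * (\<Prod>k\<in>S. y k)) = (if x = y then 2^n else 0)"
proof -
  have "(\<Sum>S\<in>Pow {..<n}. (\<Prod>k\<in>S. x k) * (\<Prod>k\<in>S. y k))
      = (\<Sum>S\<in>Pow {..<n}. (\<Prod>k\<in>S. x k * y k) * (\<Prod>k\<in>{..<n}-S. 1))"
    by (simp add: prod.distrib)
  also have "\<dots> = (\<Prod>k<n. x k * y k + 1)"
    by (rule prod_add[symmetric]) simp
  also have "\<dots> = (if x = y then 2^n else 0)"
  proof (cases "x = y")
    case True
    have "(\<Prod>k<n. x k * y k + 1) = (\<Prod>k<n. 2::real)"
      apply (rule prod.cong[OF refl]) using cube_mem[OF assms(1)] True by fastforce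
    then show ?thesis using True by simp
  next
    case False
    then obtain k where k: "k < n" "x k \<noteq> y k"
      using PiE_ext[of x "{..<n}" "\<lambda>_. {-1,1::real}" y] assms by (auto simp: cube_def)
    then have "x k * y k + 1 = 0" using cube_mem[OF assms(1) k(1)] cube_mem[OF assms(2) k(1)] by auto
    then have "(\<Prod>k<n. x k * y k + 1) = 0" using k(1) by (intro prod_zero) auto
    then show ?thesis using False by simp
  qed
  finally show ?thesis .
qed

lemma parseval:
  "(\<Sum>S\<in>Pow {..<n}. (fourier n g S)^2) = (\<Sum>x\<in>cube n. (g x)^2) / 2^n"
proof -
  have sq: "(fourier n g S)^2 = (\<Sum>x\<in>cube n. \<Sum>y\<in>cube n. g x * g y * ((\<Prod>k\<in>S. x k) * (\<Prod>k\<in>S. y k))) / (2^n * 2^n)" for S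
    unfolding fourier_def power2_eq_square by (simp add: sum_product algebra_simps)
  have "(\<Sum>S\<in>Pow {..<n}. (fourier n g S)^2)
     = (\<Sum>S\<in>Pow {..<n}. \<Sum>x\<in>cube n. \<Sum>y\<in>cube n. g x * g y * ((\<Prod>k\<in>S. x k) * (\<Prod>k\<in>S. y k))) / (2^n * 2^n)"
    unfolding sq by (simp add: sum_divide_distrib)
  also have "(\<Sum>S\<in>Pow {..<n}. \<Sum>x\<in>cube n. \<Sum>y\<in>cube n. g x * g y * ((\<Prod>k\<in>S. x k) * (\<Prod>k\<in>S. y k)))
     = (\<Sum>x\<in>cube n. \<Sum>y\<in>cube n. \<Sum>S\<in>Pow {..<n}. g x * g y * ((\<Prod>k\<in>S. x k) * (\<Prod>k\<in>S. y k)))"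
    apply (rule trans[OF sum.swap]) apply (rule sum.cong[OF refl]) by (rule sum.swap)
  also have "\<dots> = (\<Sum>x\<in>cube n. \<Sum>y\<in>cube n. g x * g y * (if x = y then 2^n else 0))"
    by (simp add: sum_distrib_left[symmetric] chi_sum)
  also have "\<dots> = (\<Sum>x\<in>cube n. (g x)^2 * 2^n)"
    apply (rule sum.cong[OF refl]) by (simp add: finite_cube power2_eq_square if_distrib cong: if_cong)
  finally show ?thesis by (simp add: sum_distrib_right[symmetric])
qed

lemma flip_cube: "x \<in> cube n \<Longrightarrow> k < n \<Longrightarrow> flip k x \<in> cube n"
  by (auto simp: cube_def PiE_iff flip_def extensional_def)

lemma flip_flip: "flip k (flip k x) = x"
  by (simp add: flip_def)

lemma chi_flip:
  assumes "finite S"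
  shows "(\<Prod>j\<in>S. flip k y j) = (if k \<in> S then - (\<Prod>j\<in>S. y j) else (\<Prod>j\<in>S. y j))"
proof (cases "k \<in> S")
  case True
  have "(\<Prod>j\<in>S. flip k y j) = flip k y k * (\<Prod>j\<in>S-{k}. flip k y j)"
    using prod.remove[OF assms True] by blast
  also have "(\<Prod>j\<in>S-{k}. flip k y j) = (\<Prod>j\<in>S-{k}. y j)"
    by (rule prod.cong) (auto simp: flip_def)
  also have "(\<Prod>j\<in>S. y j) = y k * (\<Prod>j\<in>S-{k}. y j)"
    using prod.remove[OF assms True] by blast
  ultimately show ?thesis using True by (simp add: flip_def)
next
  case False
  then show ?thesis by (auto intro!: prod.cong simp: flip_def)
qed

lemma fourier_flip:
  assumes "k < n" "S \<subseteq> {..<n}"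
  shows "fourier n (\<lambda>x. f (flip k x)) S = (if k \<in> S then - fourier n f S else fourier n f S)"
proof -
  have fin: "finite S" using assms(2) finite_subset by blast
  have "(\<Sum>x\<in>cube n. f (flip k x) * (\<Prod>j\<in>S. x j)) = (\<Sum>y\<in>cube n. f y * (\<Prod>j\<in>S. flip k y j))"
    by (rule sum.reindex_bij_witness[of _ "flip k" "flip k"]) (auto simp: flip_flip flip_cube assms)
  also have "\<dots> = (\<Sum>y\<in>cube n. (if k \<in> S then - 1 else 1) * (f y * (\<Prod>j\<in>S. y j)))"
    by (rule sum.cong[OF refl]) (simp add: chi_flip[OF fin])
  finally show ?thesis unfolding fourier_def by (simp add: sum_distrib_left[symmetric] sum_negf)
qed

lemma infl_weight:
  assumes k: "k < n" and f: "\<And>x. x \<in> cube n \<Longrightarrow> f x \<in> {-1, 1}"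
  shows "(\<Sum>S\<in>Pow {..<n}. if k \<in> S then (fourier n f S)^2 else 0) = infl_k n f k"
proof -
  define g where "g x = (f x - f (flip k x)) / 2" for x
  have fg: "fourier n g S = (if k \<in> S then fourier n f S else 0)" if "S \<in> Pow {..<n}" for S
  proof -
    have "fourier n g S = (fourier n f S - fourier n (\<lambda>x. f (flip k x)) S) / 2"
    proof -
      have "(\<Sum>x\<in>cube n. g x * (\<Prod>j\<in>S. x j)) = (\<Sum>x\<in>cube n. (f x * (\<Prod>j\<in>S. x j) - f (flip k x) * (\<Prod>j\<in>S. x j)) / 2)"
        by (rule sum.cong[OF refl]) (simp add: g_def algebra_simps)
      also have "\<dots> = ((\<Sum>x\<in>cube n. f x * (\<Prod>j\<in>S. x j)) - (\<Sum>x\<in>cube n. f (flip k x) * (\<Prod>j\<in>S. x j))) / 2"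
        by (simp only: sum_divide_distrib[symmetric] sum_subtractf)
      finally show ?thesis unfolding fourier_def by (simp add: diff_divide_distrib)
    qed
    then show ?thesis using fourier_flip[OF k, of S f] that by auto
  qed
  have "(\<Sum>S\<in>Pow {..<n}. if k \<in> S then (fourier n f S)^2 else 0) = (\<Sum>S\<in>Pow {..<n}. (fourier n g S)^2)"
    by (rule sum.cong[OF refl]) (simp add: fg)
  also have "\<dots> = (\<Sum>x\<in>cube n. (g x)^2) / 2^n" by (rule parseval)
  also have "(\<Sum>x\<in>cube n. (g x)^2) = (\<Sum>x\<in>cube n. if f x \<noteq> f (flip k x) then 1 else 0)"
  proof (rule sum.cong[OF refl])
    fix x assume x: "x \<in> cube n"
    have "f x \<in> {-1,1}" "f (flip k x) \<in> {-1,1}" using f x flip_cube[OF x k] by auto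
    then show "(g x)^2 = (if f x \<noteq> f (flip k x) then 1 else 0)" unfolding g_def by auto
  qed
  also have "\<dots> = real (card {x \<in> cube n. f x \<noteq> f (flip k x)})"
    by (simp add: sum.If_cases finite_cube Int_def)
  finally show ?thesis unfolding infl_k_def by simp
qed

lemma total_weight:
  assumes f: "\<And>x. x \<in> cube n \<Longrightarrow> f x \<in> {-1, 1}"
  shows "(\<Sum>S\<in>Pow {..<n}. (fourier n f S)^2) = 1"
proof -
  have "(\<Sum>x\<in>cube n. (f x)^2) = (\<Sum>x\<in>cube n. 1)"
    by (rule sum.cong[OF refl]) (use f in fastforce)
  then show ?thesis by (simp add: parseval card_cube)
qed

lemma entropy_bound:
  fixes W :: "nat set \<Rightarrow> real" and p :: "nat \<Rightarrow> real"
  assumes W0: "\<And>S. W S \<ge> 0"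
   and Wsum: "(\<Sum>S\<in>Pow {..<n}. W S) = 1"
   and Wp: "\<And>k. k < n \<Longrightarrow> (\<Sum>S\<in>Pow {..<n}. if k \<in> S then W S else 0) = p k"
  shows "(\<Sum>S\<in>Pow {..<n}. if W S = 0 then 0 else W S * ln (1 / W S))
     \<le> (\<Sum>k<n. - p k * ln (p k) - (1 - p k) * ln (1 - p k))"
proof -
  have fin: "finite (Pow {..<n::nat})" by simp
  have Wq: "(\<Sum>S\<in>Pow {..<n}. if k \<in> S then 0 else W S) = 1 - p k" if k: "k < n" for k
  proof -
    have "(\<Sum>S\<in>Pow {..<n}. W S) = (\<Sum>S\<in>Pow {..<n}. (if k \<in> S then W S else 0) + (if k \<in> S then 0 else W S))"
      by (rule sum.cong) auto
    then show ?thesis using Wsum Wp[OF k] by (simp add: sum.distrib)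
  qed
  have le_p: "W S \<le> p k" if "S \<in> Pow {..<n}" "k \<in> S" "k < n" for S k
  proof -
    have "(if k \<in> S then W S else 0) \<le> (\<Sum>T\<in>Pow {..<n}. if k \<in> T then W T else 0)"
      by (rule member_le_sum) (use that W0 in auto)
    then show ?thesis using that Wp by simp
  qed
  have le_q: "W S \<le> 1 - p k" if "S \<in> Pow {..<n}" "k \<notin> S" "k < n" for S k
  proof -
    have "(if k \<in> S then 0 else W S) \<le> (\<Sum>T\<in>Pow {..<n}. if k \<in> T then 0 else W T)"
      by (rule member_le_sum) (use that W0 in auto)
    then show ?thesis using that Wq by simp
  qed
  have p0: "p k \<ge> 0" if "k < n" for k
    using Wp[OF that, symmetric] by (simp add: sum_nonneg W0)
  have p1: "1 - p k \<ge> 0" if "k < n" for k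
    using Wq[OF that, symmetric] by (simp add: sum_nonneg W0)
  define c where "c S k = (if k \<in> S then p k else 1 - p k)" for S k
  define L where "L S = (\<Sum>k<n. - ln (c S k))" for S
  define Q where "Q S = (\<Prod>k<n. c S k)" for S
  have Qsum: "(\<Sum>S\<in>Pow {..<n}. Q S) = 1"
  proof -
    have "(\<Prod>k<n. p k + (1 - p k)) = (\<Sum>S\<in>Pow {..<n}. (\<Prod>k\<in>S. p k) * (\<Prod>k\<in>{..<n}-S. 1 - p k))"
      by (rule prod_add) simp
    also have "\<dots> = (\<Sum>S\<in>Pow {..<n}. Q S)"
    proof (rule sum.cong[OF refl])
      fix S assume S: "S \<in> Pow {..<n}"
      have "Q S = (\<Prod>k\<in>{..<n} \<inter> {k. k \<in> S}. p k) * (\<Prod>k\<in>{..<n} \<inter> - {k. k \<in> S}. 1 - p k)"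
        unfolding Q_def c_def by (rule prod.If_cases) simp
      also have "{..<n} \<inter> {k. k \<in> S} = S" using S by auto
      also have "{..<n} \<inter> - {k. k \<in> S} = {..<n} - S" by auto
      finally show "(\<Prod>k\<in>S. p k) * (\<Prod>k\<in>{..<n}-S. 1 - p k) = Q S" by simp
    qed
    finally show ?thesis by simp
  qed
  have termb: "(if W S = 0 then 0 else W S * ln (1 / W S)) \<le> W S * L S + Q S - W S"
    if S: "S \<in> Pow {..<n}" for S
  proof (cases "W S = 0")
    case True
    have "Q S \<ge> 0" unfolding Q_def c_def by (rule prod_nonneg) (use p0 p1 in auto)
    then show ?thesis using True by simp
  next
    case False
    then have Wpos: "W S > 0" using W0[of S] by simp
    have cpos: "c S k > 0" if "k \<in> {..<n}" for k
      using le_p[OF S, of k] le_q[OF S, of k] that Wpos unfolding c_def by (cases "k \<in> S") auto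
    have Qpos: "Q S > 0" unfolding Q_def using cpos by (intro prod_pos) auto
    have lnQ: "ln (Q S) = - L S" unfolding Q_def L_def using cpos
      by (subst ln_prod) (force, metis less_irrefl lessThan_iff, simp add: sum_negf)
    have "ln (Q S / W S) \<le> Q S / W S - 1" using Qpos Wpos by (intro ln_le_minus_one) simp
    then have "W S * ln (Q S / W S) \<le> W S * (Q S / W S - 1)" using Wpos by (simp add: mult_left_mono)
    moreover have "ln (Q S / W S) = ln (1 / W S) - L S" using Qpos Wpos lnQ by (simp add: ln_div)
    moreover have "W S * (Q S / W S - 1) = Q S - W S" using Wpos by (simp add: field_simps)
    ultimately show ?thesis using False by (simp add: algebra_simps)
  qed
  have "(\<Sum>S\<in>Pow {..<n}. if W S = 0 then 0 else W S * ln (1 / W S))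
      \<le> (\<Sum>S\<in>Pow {..<n}. W S * L S + Q S - W S)"
    by (rule sum_mono) (rule termb)
  also have "\<dots> = (\<Sum>S\<in>Pow {..<n}. W S * L S)"
    using Qsum Wsum by (simp add: sum.distrib sum_subtractf)
  also have "\<dots> = (\<Sum>k<n. \<Sum>S\<in>Pow {..<n}. W S * - ln (c S k))"
    unfolding L_def by (simp add: sum_distrib_left sum.swap[of _ "Pow {..<n}"])
  also have "\<dots> = (\<Sum>k<n. - p k * ln (p k) - (1 - p k) * ln (1 - p k))"
  proof (rule sum.cong[OF refl])
    fix k assume k: "k \<in> {..<n}"
    have "(\<Sum>S\<in>Pow {..<n}. W S * - ln (c S k)) =
      (\<Sum>S\<in>Pow {..<n}. (- ln (p k)) * (if k \<in> S then W S else 0) + (- ln (1 - p k)) * (if k \<in> S then 0 else W S))"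
      by (rule sum.cong[OF refl]) (simp add: c_def)
    also have "\<dots> = (- ln (p k)) * p k + (- ln (1 - p k)) * (1 - p k)"
      using k Wp Wq by (simp only: sum.distrib sum_distrib_left[symmetric]) simp
    finally show "(\<Sum>S\<in>Pow {..<n}. W S * - ln (c S k)) = - p k * ln (p k) - (1 - p k) * ln (1 - p k)"
      by simp
  qed
  finally show ?thesis .
qed

lemma binary_bound:
  fixes p :: real
  assumes "0 \<le> p" "p \<le> 1"
  shows "- p * ln p - (1 - p) * ln (1 - p) \<le> 3 * p + (if p = 0 then 0 else p * ln (4 / p))"
proof (cases "p = 0")
  case True then show ?thesis by simp
next
  case False
  then have pp: "p > 0" using assms by simp
  have A: "- (1 - p) * ln (1 - p) \<le> p"
  proof (cases "p = 1")
    case True then show ?thesis by simp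
  next
    case False
    then have q: "1 - p > 0" using assms by simp
    have "ln (1 / (1 - p)) \<le> 1 / (1 - p) - 1" using q by (intro ln_le_minus_one) simp
    then have "- ln (1 - p) \<le> 1 / (1 - p) - 1" using q by (simp add: ln_div)
    then have "(1 - p) * (- ln (1 - p)) \<le> (1 - p) * (1 / (1 - p) - 1)" using q by (intro mult_left_mono) auto
    also have "\<dots> = p" using q by (simp add: field_simps)
    finally show ?thesis by (simp add: algebra_simps)
  qed
  have "ln (4 / p) = ln 4 - ln p" using pp by (simp add: ln_div)
  moreover have "ln (4::real) \<ge> 0" by simp
  ultimately have "ln (4 / p) \<ge> - ln p" by linarith
  then have "p * ln (4 / p) \<ge> p * (- ln p)" using pp by (intro mult_left_mono) auto
  then have "p * ln (4 / p) \<ge> - p * ln p" by simp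
  then show ?thesis using A False pp by (simp add: algebra_simps)
qed

theorem mainTheorem2:
  fixes n :: nat and f :: "(nat \<Rightarrow> real) \<Rightarrow> real"
  assumes "n \<ge> 1"
    and "\<And>x. x \<in> cube n \<Longrightarrow> f x \<in> {-1, 1}"
  shows "spectral_entropy n f \<le> (1 / ln 2) * (3 * total_infl n f +
           (\<Sum>k<n. if infl_k n f k = 0 then 0
                    else infl_k n f k * ln (4 / infl_k n f k)))"
proof -
  define W where "W S = (fourier n f S)^2" for S
  define p where "p k = infl_k n f k" for k
  have eq: "spectral_entropy n f = (1 / ln 2) * (\<Sum>S\<in>Pow {..<n}. if W S = 0 then 0 else W S * ln (1 / W S))"
    unfolding spectral_entropy_def sum_distrib_left
    by (rule sum.cong[OF refl]) (simp add: W_def log_def)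
  have E: "(\<Sum>S\<in>Pow {..<n}. if W S = 0 then 0 else W S * ln (1 / W S))
     \<le> (\<Sum>k<n. - p k * ln (p k) - (1 - p k) * ln (1 - p k))"
  proof (rule entropy_bound)
    show "\<And>S. W S \<ge> 0" by (simp add: W_def)
    show "(\<Sum>S\<in>Pow {..<n}. W S) = 1" unfolding W_def by (rule total_weight) (rule assms(2))
    show "(\<Sum>S\<in>Pow {..<n}. if k \<in> S then W S else 0) = p k" if "k < n" for k
      unfolding W_def p_def by (rule infl_weight[OF that]) (rule assms(2))
  qed
  have pb: "0 \<le> p k \<and> p k \<le> 1" for k
  proof -
    have "card {x \<in> cube n. f x \<noteq> f (flip k x)} \<le> card (cube n)"
      by (rule card_mono[OF finite_cube]) auto
    then have "real (card {x \<in> cube n. f x \<noteq> f (flip k x)}) \<le> 2 ^ n"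
      unfolding card_cube by (metis of_nat_le_iff of_nat_numeral of_nat_power)
    then show ?thesis unfolding p_def infl_k_def by simp
  qed
  have "(\<Sum>k<n. - p k * ln (p k) - (1 - p k) * ln (1 - p k))
     \<le> (\<Sum>k<n. 3 * p k + (if p k = 0 then 0 else p k * ln (4 / p k)))"
    by (rule sum_mono) (use binary_bound pb in blast)
  also have "\<dots> = 3 * total_infl n f + (\<Sum>k<n. if infl_k n f k = 0 then 0
                    else infl_k n f k * ln (4 / infl_k n f k))"
    unfolding p_def by (simp add: sum.distrib sum_distrib_left total_infl_def)
  finally have "(\<Sum>S\<in>Pow {..<n}. if W S = 0 then 0 else W S * ln (1 / W S)) \<le> \<dots>"
    using E by linarith
  then show ?thesis unfolding eq by (intro mult_left_mono) auto
qed

end
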